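(* Let $p\in(0,1)$ and let $f\colon(\{0,1\}^n,\mu_p)\to\{0,1\}$ with $\mu_p(f)>0$ and $m=m(f)>1/p^2$. If for some $S\subseteq[n]$ with $|S|\le\frac{1}{4p}$ we have $\frac{\mu_p(f_{S\to0})}{\mu_p(f)}<\frac14$, then $\mu_p(f)<\exp(-0.001\sqrt m)$.
   Context: $\mu_p$ is the $p$-biased product measure on $\{0,1\}^n$, $\mu_p(f)=\mathbb{E}_{\mu_p}f$, and $f_{S\to0}$ is the restriction fixing all coordinates in $S$ to $0$ (its measure is the $\mu_p$-expectation over the remaining coordinates). With $\chi_i(x)=\frac{x_i-p}{\sqrt{p(1-p)}}$, $\hat f(\{i\})=\mathbb{E}_{\mu_p}[f\chi_i]$; $\delta=\max_i|\hat f(\{i\})|$ and $m(f)=|\{i:\hat f(\{i\})^2\ge\delta^2/2\}|$. *)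

theory Defs
  imports Complex_Main
begin

text \<open>Points of the cube {0,1}^I are encoded as subsets x of the coordinate set I
  (x = set of coordinates equal to 1). Boolean functions are f :: nat set => bool.\<close>

definition pmeasure :: "real \<Rightarrow> nat set \<Rightarrow> (nat set \<Rightarrow> real) \<Rightarrow> real" where
  "pmeasure p I g = (\<Sum>x\<in>Pow I. p ^ card x * (1 - p) ^ (card I - card x) * g x)"

definition mu :: "real \<Rightarrow> nat \<Rightarrow> (nat set \<Rightarrow> bool) \<Rightarrow> real" where
  "mu p n f = pmeasure p {..<n} (\<lambda>x. of_bool (f x))"

text \<open>mu_p(f_{S->0}): expectation over the coordinates outside S, those in S fixed to 0.\<close>
definition mu_restr0 :: "real \<Rightarrow> nat \<Rightarrow> (nat set \<Rightarrow> bool) \<Rightarrow> nat set \<Rightarrow> real" where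
  "mu_restr0 p n f S = pmeasure p ({..<n} - S) (\<lambda>x. of_bool (f x))"

definition chi :: "real \<Rightarrow> nat \<Rightarrow> nat set \<Rightarrow> real" where
  "chi p i x = (of_bool (i \<in> x) - p) / sqrt (p * (1 - p))"

definition fhat1 :: "real \<Rightarrow> nat \<Rightarrow> (nat set \<Rightarrow> bool) \<Rightarrow> nat \<Rightarrow> real" where
  "fhat1 p n f i = pmeasure p {..<n} (\<lambda>x. of_bool (f x) * chi p i x)"

definition delta :: "real \<Rightarrow> nat \<Rightarrow> (nat set \<Rightarrow> bool) \<Rightarrow> real" where
  "delta p n f = Max ((\<lambda>i. \<bar>fhat1 p n f i\<bar>) ` {..<n})"

definition mcount :: "real \<Rightarrow> nat \<Rightarrow> (nat set \<Rightarrow> bool) \<Rightarrow> nat" where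
  "mcount p n f = card {i\<in>{..<n}. (fhat1 p n f i)\<^sup>2 \<ge> (delta p n f)\<^sup>2 / 2}"

end

theory Submission imports Defs begin
lemma pm_cong: "(\<And>x. x \<in> Pow I \<Longrightarrow> g x = h x) \<Longrightarrow> pmeasure p I g = pmeasure p I h"
  unfolding pmeasure_def by (rule sum.cong) auto

lemma pm_cmult: "pmeasure p I (\<lambda>x. c * g x) = c * pmeasure p I g"
  unfolding pmeasure_def by (simp add: sum_distrib_left algebra_simps)

lemma pm_add: "pmeasure p I (\<lambda>x. g x + h x) = pmeasure p I g + pmeasure p I h"
  unfolding pmeasure_def by (simp add: sum.distrib algebra_simps)

lemma pm_diff: "pmeasure p I (\<lambda>x. g x - h x) = pmeasure p I g - pmeasure p I h"
  unfolding pmeasure_def by (simp add: sum_subtractf algebra_simps)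

lemma pm_sum: "pmeasure p I (\<lambda>x. \<Sum>i\<in>T. g i x) = (\<Sum>i\<in>T. pmeasure p I (g i))"
  unfolding pmeasure_def by (simp add: sum_distrib_left sum.swap[of _ T])

lemma pm_mono: assumes "0 \<le> p" "p \<le> 1" "\<And>x. x \<in> Pow I \<Longrightarrow> g x \<le> h x"
  shows "pmeasure p I g \<le> pmeasure p I h"
  unfolding pmeasure_def
  by (rule sum_mono) (use assms in \<open>auto intro!: mult_left_mono\<close>)

lemma pm_insert:
  assumes "finite I" "a \<notin> I"
  shows "pmeasure p (insert a I) g = p * pmeasure p I (\<lambda>x. g (insert a x)) + (1-p) * pmeasure p I g"
proof -
  have fin: "finite (Pow I)" using assms by simp
  have inj: "inj_on (insert a) (Pow I)" using assms(2)
    by (auto simp: inj_on_def)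
  have disj: "Pow I \<inter> insert a ` Pow I = {}" using assms(2) by auto
  have cI: "card (insert a I) = Suc (card I)" using assms by simp
  have "pmeasure p (insert a I) g = (\<Sum>x\<in>Pow I. p ^ card x * (1 - p) ^ (card (insert a I) - card x) * g x)
     + (\<Sum>x\<in>insert a ` Pow I. p ^ card x * (1 - p) ^ (card (insert a I) - card x) * g x)"
    unfolding pmeasure_def Pow_insert using fin disj by (simp add: sum.union_disjoint)
  also have "(\<Sum>x\<in>Pow I. p ^ card x * (1 - p) ^ (card (insert a I) - card x) * g x)
      = (1-p) * pmeasure p I g"
    unfolding pmeasure_def sum_distrib_left
  proof (rule sum.cong)
    fix x assume "x \<in> Pow I"
    hence "card x \<le> card I" using assms(1) by (simp add: card_mono)
    hence "card (insert a I) - card x = Suc (card I - card x)" using cI by simp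
    thus "p ^ card x * (1 - p) ^ (card (insert a I) - card x) * g x =
      (1 - p) * (p ^ card x * (1 - p) ^ (card I - card x) * g x)" by simp
  qed simp
  also have "(\<Sum>x\<in>insert a ` Pow I. p ^ card x * (1 - p) ^ (card (insert a I) - card x) * g x)
      = p * pmeasure p I (\<lambda>x. g (insert a x))"
    unfolding pmeasure_def sum_distrib_left sum.reindex[OF inj] o_def
  proof (rule sum.cong)
    fix x assume x: "x \<in> Pow I"
    hence "finite x" "a \<notin> x" using assms finite_subset by auto
    hence "card (insert a x) = Suc (card x)" by simp
    thus "p ^ card (insert a x) * (1 - p) ^ (card (insert a I) - card (insert a x)) * g (insert a x) =
      p * (p ^ card x * (1 - p) ^ (card I - card x) * g (insert a x))" using cI by simp
  qed simp
  finally show ?thesis by simp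
qed

lemma pm_prod:
  assumes "finite I"
  shows "pmeasure p I (\<lambda>x. \<Prod>i\<in>I. h i (i \<in> x)) = (\<Prod>i\<in>I. p * h i True + (1-p) * h i False)"
  using assms
proof (induction I rule: finite_induct)
  case empty
  then show ?case by (simp add: pmeasure_def)
next
  case (insert a I)
  have 1: "pmeasure p I (\<lambda>x. \<Prod>i\<in>insert a I. h i (i \<in> insert a x)) =
        h a True * pmeasure p I (\<lambda>x. \<Prod>i\<in>I. h i (i \<in> x))"
    unfolding pm_cmult[symmetric]
  proof (rule pm_cong)
    fix x assume x: "x \<in> Pow I"
    have "(\<Prod>i\<in>I. h i (i \<in> insert a x)) = (\<Prod>i\<in>I. h i (i \<in> x))"
    proof (rule prod.cong)
      fix i assume "i \<in> I" hence "i \<noteq> a" using insert by auto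
      thus "h i (i \<in> insert a x) = h i (i \<in> x)" by simp
    qed simp
    thus "(\<Prod>i\<in>insert a I. h i (i \<in> insert a x)) = h a True * (\<Prod>i\<in>I. h i (i \<in> x))"
      using insert by simp
  qed
  have 2: "pmeasure p I (\<lambda>x. \<Prod>i\<in>insert a I. h i (i \<in> x)) =
        h a False * pmeasure p I (\<lambda>x. \<Prod>i\<in>I. h i (i \<in> x))"
    unfolding pm_cmult[symmetric]
  proof (rule pm_cong)
    fix x assume "x \<in> Pow I" hence "a \<notin> x" using insert by auto
    thus "(\<Prod>i\<in>insert a I. h i (i \<in> x)) = h a False * (\<Prod>i\<in>I. h i (i \<in> x))"
      using insert by simp
  qed
  show ?case unfolding pm_insert[OF insert(1,2)] 1 2 insert(3)
    using insert by (simp add: algebra_simps)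
qed

lemma pm_const: assumes "finite I" shows "pmeasure p I (\<lambda>_. c) = c"
proof -
  have "pmeasure p I (\<lambda>_. 1) = 1" using pm_prod[OF assms, of p "\<lambda>_ _. 1"] by simp
  thus ?thesis using pm_cmult[of p I c "\<lambda>_. 1"] by simp
qed

lemma pm_restr:
  assumes "finite S" "finite J" "S \<inter> J = {}"
  shows "pmeasure p (J \<union> S) (\<lambda>x. of_bool (x \<inter> S = {}) * g x) = (1-p) ^ card S * pmeasure p J g"
  using assms
proof (induction S rule: finite_induct)
  case empty
  then show ?case by simp
next
  case (insert a S)
  have fin: "finite (J \<union> S)" "a \<notin> J \<union> S" using insert by auto
  have e: "J \<union> insert a S = insert a (J \<union> S)" by auto
  have "pmeasure p (J \<union> insert a S) (\<lambda>x. of_bool (x \<inter> insert a S = {}) * g x)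
     = (1-p) * pmeasure p (J \<union> S) (\<lambda>x. of_bool (x \<inter> S = {}) * g x)"
    unfolding e pm_insert[OF fin]
  proof -
    have "pmeasure p (J \<union> S) (\<lambda>x. of_bool (insert a x \<inter> insert a S = {}) * g (insert a x)) = 0"
      by (simp add: pmeasure_def)
    moreover have "pmeasure p (J \<union> S) (\<lambda>x. of_bool (x \<inter> insert a S = {}) * g x)
       = pmeasure p (J \<union> S) (\<lambda>x. of_bool (x \<inter> S = {}) * g x)"
      by (rule pm_cong) (use fin in auto)
    ultimately show "p * pmeasure p (J \<union> S) (\<lambda>x. of_bool (insert a x \<inter> insert a S = {}) * g (insert a x)) +
     (1 - p) * pmeasure p (J \<union> S) (\<lambda>x. of_bool (x \<inter> insert a S = {}) * g x) =
     (1 - p) * pmeasure p (J \<union> S) (\<lambda>x. of_bool (x \<inter> S = {}) * g x)" by simp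
  qed
  also have "\<dots> = (1-p) ^ card (insert a S) * pmeasure p J g"
    using insert by simp
  finally show ?case .
qed

lemma factor_bound:
  fixes p s :: real assumes "0 < p" "p < 1" "s = 1 \<or> s = -1"
  shows "p * exp (s * (1 - p)) + (1 - p) * exp (s * (0 - p)) \<le> exp p"
  using assms(3)
proof
  assume s: "s = 1"
  have e3: "exp 1 \<le> (3::real)" by (rule exp_le)
  have "1 + 2*p \<le> exp (2*p)" using exp_ge_add_one_self[of "2*p"] by simp
  moreover have "p * exp 1 \<le> p * 3" using e3 assms by (intro mult_left_mono) auto
  ultimately have h: "p * exp 1 + (1 - p) \<le> exp (2 * p)" by linarith
  have "p * exp (1 - p) + (1 - p) * exp (- p) = exp (-p) * (p * exp 1 + (1 - p))"
    by (simp add: algebra_simps exp_diff exp_minus field_simps)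
  also have "\<dots> \<le> exp (-p) * exp (2*p)" using h by (intro mult_left_mono) auto
  also have "\<dots> = exp p" by (simp add: exp_add[symmetric])
  finally show ?thesis using s by simp
next
  assume s: "s = -1"
  have "exp (-(1-p)) \<le> exp p" using assms by simp
  hence "p * exp (-(1 - p)) + (1 - p) * exp p \<le> p * exp p + (1-p) * exp p"
    using assms by (intro add_right_mono mult_left_mono) auto
  thus ?thesis using s by (simp add: algebra_simps)
qed

theorem mainTheorem18:
  fixes p :: real and n :: nat and f :: "nat set \<Rightarrow> bool" and S :: "nat set"
  assumes "0 < p" "p < 1"
    and "mu p n f > 0"
    and "real (mcount p n f) > 1 / p\<^sup>2"
    and "S \<subseteq> {..<n}" "real (card S) \<le> 1 / (4 * p)"
    and "mu_restr0 p n f S / mu p n f < 1 / 4"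
  shows "mu p n f < exp (- 0.001 * sqrt (real (mcount p n f)))"
proof -
  note p = assms(1,2)
  define I where "I = {..<n}"
  define \<mu> where "\<mu> = mu p n f"
  define F where "F = (\<lambda>x. of_bool (f x) :: real)"
  define \<sigma> where "\<sigma> = sqrt (p * (1 - p))"
  define k where "k = card S"
  define \<delta> where "\<delta> = delta p n f"
  define T where "T = {i\<in>{..<n}. (fhat1 p n f i)\<^sup>2 \<ge> \<delta>\<^sup>2 / 2}"
  define m where "m = card T"
  define a where "a = (\<lambda>i. pmeasure p I (\<lambda>x. F x * (of_bool (i \<in> x) - p)))"
  have finI: "finite I" unfolding I_def by simp
  have finS: "finite S" using assms(5) finite_subset by auto
  have finT: "finite T" unfolding T_def by simp
  have TI: "T \<subseteq> I" unfolding T_def I_def by auto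
  have mdef: "mcount p n f = m" unfolding m_def T_def mcount_def \<delta>_def by simp
  have mu: "\<mu> = pmeasure p I F" unfolding \<mu>_def mu_def I_def F_def by simp
  have \<mu>pos: "\<mu> > 0" using assms(3) \<mu>_def by simp
  have \<sigma>pos: "\<sigma> > 0" unfolding \<sigma>_def using p by simp
  have F01: "F x = 0 \<or> F x = 1" for x unfolding F_def by simp
  have Fnn: "F x \<ge> 0" for x unfolding F_def by simp
  have pk: "4 * p * real k \<le> 1" using assms(6) p unfolding k_def by (simp add: field_simps)
  have mpos: "real m > 1 / p^2" using assms(4) mdef by simp
  have m0: "real m > 0" using mpos p by (smt (verit) divide_pos_pos zero_less_power)
  have fh: "fhat1 p n f i = a i / \<sigma>" for i
  proof -
    have "fhat1 p n f i = pmeasure p I (\<lambda>x. (1/\<sigma>) * (F x * (of_bool (i \<in> x) - p)))"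
      unfolding fhat1_def chi_def I_def F_def \<sigma>_def
      by (rule arg_cong[where f="pmeasure p {..<n}"]) (simp add: fun_eq_iff)
    thus ?thesis unfolding pm_cmult a_def by simp
  qed
  have restr: "pmeasure p I (\<lambda>x. of_bool (x \<inter> S = {}) * F x) \<le> mu_restr0 p n f S"
  proof -
    have e: "I = (I - S) \<union> S" using assms(5) I_def by auto
    have "pmeasure p I (\<lambda>x. of_bool (x \<inter> S = {}) * F x) = (1-p)^card S * mu_restr0 p n f S"
      unfolding mu_restr0_def F_def I_def
      by (subst e[unfolded I_def]) (rule pm_restr, use finS in auto)
    moreover have "mu_restr0 p n f S \<ge> 0"
      using pm_mono[of p "{..<n} - S" "\<lambda>_. 0" "\<lambda>x. of_bool (f x)"] p
        pm_const[of "{..<n} - S" p 0] unfolding mu_restr0_def by simp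
    moreover have "(1-p)^card S \<le> 1" using p by (simp add: power_le_one)
    ultimately show ?thesis using mult_right_mono[of "(1-p)^card S" 1 "mu_restr0 p n f S"] by simp
  qed
  have r4: "mu_restr0 p n f S < \<mu> / 4" using assms(7) \<mu>pos \<mu>_def by (simp add: field_simps)
  have sumS: "(\<Sum>i\<in>S. a i) > \<mu> / 2"
  proof -
    have "(\<Sum>i\<in>S. a i) = pmeasure p I (\<lambda>x. \<Sum>i\<in>S. F x * (of_bool (i \<in> x) - p))"
      unfolding a_def pm_sum ..
    also have "\<dots> \<ge> pmeasure p I (\<lambda>x. (F x - of_bool (x \<inter> S = {}) * F x) - p * k * F x)"
    proof (rule pm_mono)
      fix x assume "x \<in> Pow I"
      have "(\<Sum>i\<in>S. F x * (of_bool (i \<in> x) - p)) = F x * (real (card (S \<inter> x)) - p * k)"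
        using finS by (simp add: sum_distrib_left[symmetric] sum_subtractf k_def algebra_simps)
      moreover have "x \<inter> S \<noteq> {} \<Longrightarrow> card (S \<inter> x) \<ge> 1"
        using finS by (metis Int_commute One_nat_def Suc_leI card_gt_0_iff finite_Int)
      ultimately show "F x - of_bool (x \<inter> S = {}) * F x - p * real k * F x
          \<le> (\<Sum>i\<in>S. F x * (of_bool (i \<in> x) - p))"
        using F01[of x] by (cases "x \<inter> S = {}") (auto simp: algebra_simps)
    qed (use p in auto)
    also have "pmeasure p I (\<lambda>x. (F x - of_bool (x \<inter> S = {}) * F x) - p * k * F x)
        = \<mu> - pmeasure p I (\<lambda>x. of_bool (x \<inter> S = {}) * F x) - p * k * \<mu>"
      unfolding pm_diff pm_cmult mu by simp
    finally have "(\<Sum>i\<in>S. a i) \<ge> \<mu> - pmeasure p I (\<lambda>x. of_bool (x \<inter> S = {}) * F x) - p * k * \<mu>" .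
    moreover have "(p * k) * \<mu> \<le> (1/4) * \<mu>" using pk \<mu>pos by (intro mult_right_mono) auto
    ultimately show ?thesis using restr r4 by linarith
  qed
  have absle: "\<bar>fhat1 p n f i\<bar> \<le> \<delta>" if "i \<in> I" for i
    unfolding \<delta>_def delta_def using that I_def by (intro Max_ge) auto
  have "(\<Sum>i\<in>S. a i) \<le> (\<Sum>i\<in>S. \<sigma> * \<delta>)"
  proof (rule sum_mono)
    fix i assume "i \<in> S"
    hence "\<bar>fhat1 p n f i\<bar> \<le> \<delta>" using absle assms(5) I_def by auto
    hence "a i / \<sigma> \<le> \<delta>" using fh[of i] by linarith
    thus "a i \<le> \<sigma> * \<delta>" using \<sigma>pos by (simp add: field_simps)
  qed
  hence ksd: "real k * (\<sigma> * \<delta>) > \<mu> / 2" using sumS k_def by simp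
  hence kpos: "real k > 0" using \<mu>pos by (cases "k = 0") auto
  have sd: "\<sigma> * \<delta> > 2 * p * \<mu>"
  proof -
    have "(4 * p * real k) * \<mu> \<le> 1 * \<mu>" using pk \<mu>pos by (intro mult_right_mono) auto
    hence a1: "real k * (2 * p * \<mu>) \<le> \<mu> / 2" by (simp add: algebra_simps)
    show ?thesis
    proof (rule ccontr)
      assume "\<not> ?thesis"
      hence "real k * (\<sigma> * \<delta>) \<le> real k * (2 * p * \<mu>)" using kpos by (intro mult_left_mono) auto
      thus False using a1 ksd by linarith
    qed
  qed
  define s where "s = (\<lambda>i. if fhat1 p n f i \<ge> 0 then 1 else -1 :: real)"
  have sa: "s i * a i \<ge> 0.7 * (\<sigma> * \<delta>)" if "i \<in> T" for i
  proof -
    have "(fhat1 p n f i)\<^sup>2 \<ge> (0.7 * \<delta>)\<^sup>2" using that unfolding T_def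
      by (auto simp: power2_eq_square) (smt (verit) zero_le_square)
    hence "\<bar>0.7 * \<delta>\<bar> \<le> \<bar>fhat1 p n f i\<bar>" using abs_le_square_iff by blast
    hence "0.7 * \<delta> \<le> \<bar>fhat1 p n f i\<bar>" by linarith
    moreover have "s i * a i = \<sigma> * \<bar>fhat1 p n f i\<bar>" using fh[of i] \<sigma>pos unfolding s_def
      by (auto simp: abs_if zero_le_divide_iff divide_less_0_iff)
    ultimately show ?thesis using \<sigma>pos by (simp add: mult_left_mono)
  qed
  have sumT: "(\<Sum>i\<in>T. s i * a i) > 1.4 * m * p * \<mu>"
  proof -
    have "(\<Sum>i\<in>T. s i * a i) \<ge> (\<Sum>i\<in>T. 0.7 * (\<sigma> * \<delta>))" using sa by (rule sum_mono)
    hence "(\<Sum>i\<in>T. s i * a i) \<ge> m * (0.7 * (\<sigma> * \<delta>))" using m_def by simp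
    moreover have "m * (0.7 * (\<sigma> * \<delta>)) > m * (0.7 * (2 * p * \<mu>))" using sd m0 by (simp add: algebra_simps)
    ultimately show ?thesis by (simp add: algebra_simps)
  qed
  define g where "g = (\<lambda>x. \<Sum>i\<in>T. s i * (of_bool (i \<in> x) - p))"
  have EFg: "pmeasure p I (\<lambda>x. F x * g x) = (\<Sum>i\<in>T. s i * a i)"
    unfolding g_def a_def pm_cmult[symmetric] pm_sum[symmetric] sum_distrib_left
    by (simp add: algebra_simps)
  define c where "c = (\<Sum>i\<in>T. s i * a i) / \<mu>"
  have cbig: "c > 1.4 * m * p" unfolding c_def using sumT \<mu>pos by (simp add: field_simps)
  have low: "exp c * \<mu> \<le> pmeasure p I (\<lambda>x. exp (g x))"
  proof -
    have "pmeasure p I (\<lambda>x. exp c * ((1 - c) * F x + F x * g x)) \<le> pmeasure p I (\<lambda>x. exp (g x))"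
    proof (rule pm_mono)
      fix x
      have "exp (g x) = exp c * exp (g x - c)" by (simp add: exp_add[symmetric])
      also have "\<dots> \<ge> exp c * (1 + (g x - c))" using exp_ge_add_one_self[of "g x - c"] by simp
      finally show "exp c * ((1 - c) * F x + F x * g x) \<le> exp (g x)"
        using F01[of x] by (auto simp: algebra_simps)
    qed (use p in auto)
    moreover have "pmeasure p I (\<lambda>x. exp c * ((1 - c) * F x + F x * g x)) = exp c * \<mu>"
      unfolding pm_cmult pm_add EFg mu[symmetric] using \<mu>pos c_def by (simp add: field_simps)
    ultimately show ?thesis by simp
  qed
  define q where "q = (\<lambda>i. p * exp (s i * (1 - p)) + (1 - p) * exp (s i * (0 - p)))"
  have up: "pmeasure p I (\<lambda>x. exp (g x)) \<le> exp (m * p)"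
  proof -
    define h where "h = (\<lambda>i b. if i \<in> T then exp (s i * (of_bool b - p)) else 1)"
    have "pmeasure p I (\<lambda>x. exp (g x)) = pmeasure p I (\<lambda>x. \<Prod>i\<in>I. h i (i \<in> x))"
    proof (rule pm_cong)
      fix x
      have "exp (g x) = (\<Prod>i\<in>T. exp (s i * (of_bool (i \<in> x) - p)))"
        unfolding g_def using finT by (simp add: exp_sum)
      also have "\<dots> = (\<Prod>i\<in>I \<inter> T. exp (s i * (of_bool (i \<in> x) - p)))"
        using TI by (simp add: Int_absorb1 Int_commute)
      also have "\<dots> = (\<Prod>i\<in>I. h i (i \<in> x))"
        unfolding h_def using finI by (simp add: prod.inter_restrict)
      finally show "exp (g x) = (\<Prod>i\<in>I. h i (i \<in> x))" .
    qed
    also have "\<dots> = (\<Prod>i\<in>I. p * h i True + (1-p) * h i False)" by (rule pm_prod[OF finI])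
    also have "\<dots> = (\<Prod>i\<in>I. if i \<in> T then q i else 1)"
      by (rule prod.cong) (auto simp: h_def q_def)
    also have "\<dots> = (\<Prod>i\<in>I \<inter> T. q i)" using finI by (simp add: prod.inter_restrict)
    also have "\<dots> = (\<Prod>i\<in>T. q i)" using TI by (simp add: Int_absorb1)
    also have "\<dots> \<le> (\<Prod>i\<in>T. exp p)"
    proof (rule prod_mono)
      fix i assume "i \<in> T"
      have "s i = 1 \<or> s i = -1" unfolding s_def by auto
      thus "0 \<le> q i \<and> q i \<le> exp p" unfolding q_def using factor_bound[OF p] p
        by (auto intro!: add_nonneg_nonneg mult_nonneg_nonneg)
    qed
    also have "\<dots> = exp (m * p)" using m_def by (simp add: exp_of_nat_mult)
    finally show ?thesis .
  qed
  have "exp c * \<mu> \<le> exp (m * p)" using low up by simp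
  moreover have "exp (c + ln \<mu>) = exp c * \<mu>" using \<mu>pos by (simp add: exp_add)
  ultimately have "exp (c + ln \<mu>) \<le> exp (m * p)" by simp
  hence lnmu: "ln \<mu> \<le> m * p - c" by simp
  have "p^2 * m > 1" using mpos p by (simp add: field_simps)
  hence "(p * sqrt m)^2 > 1" using m0 by (simp add: power_mult_distrib)
  hence psm: "p * sqrt m > 1"
  proof -
    assume h: "(p * sqrt m)^2 > 1"
    show ?thesis
    proof (rule ccontr)
      assume "\<not> ?thesis"
      hence "(p * sqrt m)^2 \<le> 1" using p by (intro power_le_one) auto
      thus False using h by simp
    qed
  qed
  have ss: "sqrt (real m) * sqrt (real m) = real m" by simp
  have "sqrt m * (p * sqrt m) = p * (sqrt m * sqrt m)" by (simp only: mult_ac)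
  hence eqm: "sqrt m * (p * sqrt m) = m * p" unfolding ss by (simp only: mult_ac)
  have "sqrt m * 1 < sqrt m * (p * sqrt m)" using psm m0 by (intro mult_strict_left_mono) auto
  hence mps: "m * p > sqrt m" unfolding eqm by simp
  have c2: "c > 1.4 * (m * p)" using cbig by (simp add: algebra_simps)
  have "sqrt m > 0" using m0 by simp
  hence l4: "ln \<mu> < - (4/10) * sqrt m" using lnmu c2 mps by linarith
  have "- 0.001 * sqrt m = - (sqrt m / 1000)" by simp
  hence "ln \<mu> < - 0.001 * sqrt m" using l4 \<open>sqrt m > 0\<close> by linarith
  hence "\<mu> < exp (- 0.001 * sqrt m)" using \<mu>pos by (metis exp_less_mono exp_ln)
  thus ?thesis unfolding \<mu>_def mdef .
qed

end
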